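(* Let $(X_i,A_i,Y_i)_{1\le i\le n}$ be random with $X_i\in\mathcal X$, $A_i\in\{0,1\}$, $Y_i\in\mathcal Y$, let $X'_1,\dots,X'_M$ be the distinct values of $X_1,\dots,X_n$ and $I_k=\{i:X_i=X'_k\}$. Suppose that, conditionally on $(X_{1:n},A_{1:n})$, the joint distribution of $(Y_1,\dots,Y_n)$ is invariant under every permutation of $[n]$ mapping each $I_k$ to itself. For all $x\in\mathcal X$ define (when $N^{(0)}\ge1$) $$\hat C^2(x)=\Big\{y\in\mathcal Y: s(x,y)\le Q_{1-\alpha^2}\Big(\sum_{k=1}^M\sum_{i\in I_k}\frac{N_k^0}{(N^{(0)})^2N_k}\delta_{\bar S_i}+\sum_{k=1}^M\sum_{\substack{i,j\in I_k\\ i\ne j}}\frac{N_k^0(N_k^0-1)}{(N^{(0)})^2N_k(N_k-1)}\delta_{\min\{\bar S_i,\bar S_j\}}+\sum_{1\le k\ne k'\le M}\sum_{i\in I_k}\sum_{j\in I_{k'}}\frac{N_k^0N_{k'}^0}{(N^{(0)})^2N_kN_{k'}}\delta_{\min\{\bar S_i,\bar S_j\}}\Big)\Big\},$$ with $\frac{N_k^0(N_k^0-1)}{N_k(N_k-1)}:=0$ when $N_k=1$. Then $$\mathbb E\Big[\Big(\frac{1}{N^{(0)}}\sum_{i\in I_{A=0}}\mathbf 1\{Y_i\notin\hat C^2(X_i)\}\Big)^2\ \Big|\ X_{1:n},A_{1:n}\Big]\le\alpha^2.$$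
   Context: $Y_i$ is observed only when $A_i=1$. $s:\mathcal X\times\mathcal Y\to\mathbb R$ is a fixed measurable score, $S_i=s(X_i,Y_i)$, and $\bar S_i=S_i$ if $A_i=1$, $\bar S_i=+\infty$ if $A_i=0$. $I_{A=0}=\{i:A_i=0\}$, $N^{(0)}=|I_{A=0}|$; $N_k=|I_k|$, $N_k^0=|\{i\in I_k:A_i=0\}|$. $Q_{1-\beta}(P)=\inf\{t:\mathbb P_{T\sim P}(T\le t)\ge1-\beta\}$ for a distribution $P$ on $\mathbb R\cup\{+\infty\}$; $\delta_v$ is a point mass. The miscoverage proportion $\frac{1}{N^{(0)}}\sum_{i\in I_{A=0}}\mathbf 1\{Y_i\notin\hat C^2(X_i)\}$ is defined as $0$ when $N^{(0)}=0$. *)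

theory Defs
  imports "HOL-Probability.Probability"
begin

text \<open>Data indices are 0..n-1. The conditioning variables X_{1:n}, A_{1:n} are fixed
  (deterministic) functions; A i = True encodes A_i = 1 (Y_i observed).
  The groups I_k are indexed by the distinct values v of X on {..<n}.\<close>

definition grp :: "(nat \<Rightarrow> 'x) \<Rightarrow> nat \<Rightarrow> 'x \<Rightarrow> nat set" where
  "grp X n v = {i \<in> {..<n}. X i = v}"

definition Nk :: "(nat \<Rightarrow> 'x) \<Rightarrow> nat \<Rightarrow> 'x \<Rightarrow> nat" where
  "Nk X n v = card (grp X n v)"

definition Nk0 :: "(nat \<Rightarrow> 'x) \<Rightarrow> (nat \<Rightarrow> bool) \<Rightarrow> nat \<Rightarrow> 'x \<Rightarrow> nat" where
  "Nk0 X A n v = card {i \<in> grp X n v. \<not> A i}"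

definition N0 :: "(nat \<Rightarrow> bool) \<Rightarrow> nat \<Rightarrow> nat" where
  "N0 A n = card {i \<in> {..<n}. \<not> A i}"

definition Sbar :: "('x \<Rightarrow> 'y \<Rightarrow> real) \<Rightarrow> (nat \<Rightarrow> 'x) \<Rightarrow> (nat \<Rightarrow> bool) \<Rightarrow> (nat \<Rightarrow> 'y) \<Rightarrow> nat \<Rightarrow> ereal" where
  "Sbar s X A y i = (if A i then ereal (s (X i) (y i)) else \<infinity>)"

definition pairc :: "(nat \<Rightarrow> 'x) \<Rightarrow> (nat \<Rightarrow> bool) \<Rightarrow> nat \<Rightarrow> 'x \<Rightarrow> real" where
  "pairc X A n v = (if Nk X n v = 1 then 0 else
     (real (Nk0 X A n v) * (real (Nk0 X A n v) - 1)) / (real (Nk X n v) * (real (Nk X n v) - 1)))"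

text \<open>Cumulative distribution function P(T <= t) of the discrete mixture of point masses
  appearing in the definition of C^2, as a function of t in the extended reals.\<close>
definition mixcdf :: "('x \<Rightarrow> 'y \<Rightarrow> real) \<Rightarrow> (nat \<Rightarrow> 'x) \<Rightarrow> (nat \<Rightarrow> bool) \<Rightarrow> nat \<Rightarrow> (nat \<Rightarrow> 'y) \<Rightarrow> ereal \<Rightarrow> real" where
  "mixcdf s X A n y t =
     (let V = X ` {..<n}; N = real (N0 A n); S = Sbar s X A y in
      (\<Sum>v\<in>V. \<Sum>i\<in>grp X n v.
          real (Nk0 X A n v) / (N\<^sup>2 * real (Nk X n v)) * (if S i \<le> t then 1 else 0))
    + (\<Sum>v\<in>V. \<Sum>i\<in>grp X n v. \<Sum>j\<in>grp X n v - {i}.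
          pairc X A n v / N\<^sup>2 * (if min (S i) (S j) \<le> t then 1 else 0))
    + (\<Sum>v\<in>V. \<Sum>v'\<in>V - {v}. \<Sum>i\<in>grp X n v. \<Sum>j\<in>grp X n v'.
          real (Nk0 X A n v) * real (Nk0 X A n v') / (N\<^sup>2 * real (Nk X n v) * real (Nk X n v'))
          * (if min (S i) (S j) \<le> t then 1 else 0)))"

definition quant2 :: "real \<Rightarrow> ('x \<Rightarrow> 'y \<Rightarrow> real) \<Rightarrow> (nat \<Rightarrow> 'x) \<Rightarrow> (nat \<Rightarrow> bool) \<Rightarrow> nat \<Rightarrow> (nat \<Rightarrow> 'y) \<Rightarrow> ereal" where
  "quant2 \<beta> s X A n y = Inf {t. mixcdf s X A n y t \<ge> 1 - \<beta>}"

definition C2 :: "real \<Rightarrow> ('x \<Rightarrow> 'y \<Rightarrow> real) \<Rightarrow> (nat \<Rightarrow> 'x) \<Rightarrow> (nat \<Rightarrow> bool) \<Rightarrow> nat \<Rightarrow> (nat \<Rightarrow> 'y) \<Rightarrow> 'x \<Rightarrow> 'y set" where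
  "C2 \<alpha> s X A n y x = {yy. ereal (s x yy) \<le> quant2 (\<alpha>\<^sup>2) s X A n y}"

definition miscov :: "real \<Rightarrow> ('x \<Rightarrow> 'y \<Rightarrow> real) \<Rightarrow> (nat \<Rightarrow> 'x) \<Rightarrow> (nat \<Rightarrow> bool) \<Rightarrow> nat \<Rightarrow> (nat \<Rightarrow> 'y) \<Rightarrow> real" where
  "miscov \<alpha> s X A n y = (if N0 A n = 0 then 0 else
     (\<Sum>i\<in>{i \<in> {..<n}. \<not> A i}. if y i \<notin> C2 \<alpha> s X A n y (X i) then 1 else 0) / real (N0 A n))"

end

theory Submission
  imports Defs
begin


definition U2 :: "nat \<Rightarrow> (nat \<times> nat) set" where "U2 n = {..<n} \<times> {..<n}"

definition Rel :: "(nat \<Rightarrow> 'x) \<Rightarrow> nat \<Rightarrow> nat \<times> nat \<Rightarrow> nat \<times> nat \<Rightarrow> bool" where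
  "Rel X n p q = (p \<in> U2 n \<and> q \<in> U2 n \<and> X (fst p) = X (fst q) \<and> X (snd p) = X (snd q)
     \<and> (fst p = snd p \<longleftrightarrow> fst q = snd q))"

definition cls :: "(nat \<Rightarrow> 'x) \<Rightarrow> nat \<Rightarrow> nat \<times> nat \<Rightarrow> (nat \<times> nat) set" where
  "cls X n p = {q. Rel X n p q}"

definition I0 :: "(nat \<Rightarrow> bool) \<Rightarrow> nat \<Rightarrow> nat set" where
  "I0 A n = {i \<in> {..<n}. \<not> A i}"

definition cw :: "(nat \<Rightarrow> 'x) \<Rightarrow> (nat \<Rightarrow> bool) \<Rightarrow> nat \<Rightarrow> nat \<times> nat \<Rightarrow> real" where
  "cw X A n p = real (card (cls X n p \<inter> (I0 A n \<times> I0 A n))) / ((real (N0 A n))\<^sup>2 * real (card (cls X n p)))"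

lemma Rel_sym: "Rel X n p q \<Longrightarrow> Rel X n q p"
  unfolding Rel_def by auto
lemma Rel_trans: "Rel X n p q \<Longrightarrow> Rel X n q r \<Longrightarrow> Rel X n p r"
  unfolding Rel_def by auto
lemma Rel_refl: "p \<in> U2 n \<Longrightarrow> Rel X n p p"
  unfolding Rel_def by auto
lemma cls_sub: "cls X n p \<subseteq> U2 n"
  unfolding cls_def Rel_def by auto
lemma finite_U2: "finite (U2 n)" unfolding U2_def by auto
lemma finite_cls: "finite (cls X n p)"
  using cls_sub finite_U2 finite_subset by metis
lemma cls_eq: "Rel X n p q \<Longrightarrow> cls X n p = cls X n q"
  unfolding cls_def using Rel_sym Rel_trans by blast
lemma card_cls_pos: "p \<in> U2 n \<Longrightarrow> card (cls X n p) > 0"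
  using finite_cls Rel_refl unfolding cls_def
  by (metis card_gt_0_iff empty_iff mem_Collect_eq)
lemma cw_nonneg: "cw X A n p \<ge> 0" unfolding cw_def by auto
lemma cw_eq: "Rel X n p q \<Longrightarrow> cw X A n p = cw X A n q"
  unfolding cw_def using cls_eq by metis
lemma I0_sub: "I0 A n \<subseteq> {..<n}" unfolding I0_def by auto
lemma card_I0: "card (I0 A n) = N0 A n" unfolding I0_def N0_def by simp

lemma swap_lemma:
  fixes h :: "nat \<times> nat \<Rightarrow> real"
  shows "(\<Sum>q\<in>I0 A n \<times> I0 A n. (1 / real (card (cls X n q))) * (\<Sum>p\<in>cls X n q. h p))
       = (\<Sum>p\<in>U2 n. h p * real (card (cls X n p \<inter> (I0 A n \<times> I0 A n))) / real (card (cls X n p)))"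
proof -
  have fin0: "finite (I0 A n \<times> I0 A n)" using I0_sub by (meson finite_SigmaI finite_lessThan finite_subset)
  have sub0: "I0 A n \<times> I0 A n \<subseteq> U2 n" using I0_sub unfolding U2_def by auto
  have "(\<Sum>q\<in>I0 A n \<times> I0 A n. (1 / real (card (cls X n q))) * (\<Sum>p\<in>cls X n q. h p))
     = (\<Sum>q\<in>I0 A n \<times> I0 A n. \<Sum>p\<in>U2 n. (if Rel X n q p then h p / real (card (cls X n p)) else 0))"
  proof (rule sum.cong[OF refl])
    fix q assume q: "q \<in> I0 A n \<times> I0 A n"
    have "(1 / real (card (cls X n q))) * (\<Sum>p\<in>cls X n q. h p) = (\<Sum>p\<in>cls X n q. h p / real (card (cls X n p)))"
      unfolding sum_distrib_left
    proof (rule sum.cong[OF refl])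
      fix p assume "p \<in> cls X n q"
      then have "cls X n q = cls X n p" using cls_eq unfolding cls_def by blast
      then show "1 / real (card (cls X n q)) * h p = h p / real (card (cls X n p))" by simp
    qed
    also have "\<dots> = (\<Sum>p\<in>U2 n. (if Rel X n q p then h p / real (card (cls X n p)) else 0))"
      using finite_U2 cls_sub[of X n q] unfolding cls_def
      by (simp add: sum.If_cases Int_absorb1 Collect_conj_eq[symmetric] inf_commute)
    finally show "(1 / real (card (cls X n q))) * (\<Sum>p\<in>cls X n q. h p) = (\<Sum>p\<in>U2 n. (if Rel X n q p then h p / real (card (cls X n p)) else 0))" .
  qed
  also have "\<dots> = (\<Sum>p\<in>U2 n. \<Sum>q\<in>I0 A n \<times> I0 A n. (if Rel X n q p then h p / real (card (cls X n p)) else 0))"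
    by (rule sum.swap)
  also have "\<dots> = (\<Sum>p\<in>U2 n. h p * real (card (cls X n p \<inter> (I0 A n \<times> I0 A n))) / real (card (cls X n p)))"
  proof (rule sum.cong[OF refl])
    fix p assume p: "p \<in> U2 n"
    have "(\<Sum>q\<in>I0 A n \<times> I0 A n. (if Rel X n q p then h p / real (card (cls X n p)) else 0))
        = (\<Sum>q\<in>cls X n p \<inter> (I0 A n \<times> I0 A n). h p / real (card (cls X n p)))"
      using fin0 unfolding cls_def
      by (simp add: sum.If_cases) (metis (no_types, lifting) Collect_cong Int_def Rel_sym inf_commute mem_Collect_eq)
    also have "\<dots> = h p * real (card (cls X n p \<inter> (I0 A n \<times> I0 A n))) / real (card (cls X n p))"
      by simp
    finally show "(\<Sum>q\<in>I0 A n \<times> I0 A n. (if Rel X n q p then h p / real (card (cls X n p)) else 0))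
        = h p * real (card (cls X n p \<inter> (I0 A n \<times> I0 A n))) / real (card (cls X n p))" .
  qed
  finally show ?thesis .
qed

lemma cw_total:
  assumes "N0 A n > 0"
  shows "(\<Sum>p\<in>U2 n. cw X A n p) = 1"
proof -
  have "(\<Sum>q\<in>I0 A n \<times> I0 A n. (1 / real (card (cls X n q))) * (\<Sum>p\<in>cls X n q. (1::real)))
       = (\<Sum>p\<in>U2 n. 1 * real (card (cls X n p \<inter> (I0 A n \<times> I0 A n))) / real (card (cls X n p)))"
    by (rule swap_lemma)
  moreover have "(\<Sum>q\<in>I0 A n \<times> I0 A n. (1 / real (card (cls X n q))) * (\<Sum>p\<in>cls X n q. (1::real)))
      = real (N0 A n)^2"
  proof -
    have "\<And>q. q \<in> I0 A n \<times> I0 A n \<Longrightarrow> (1 / real (card (cls X n q))) * (\<Sum>p\<in>cls X n q. (1::real)) = 1"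
    proof -
      fix q assume "q \<in> I0 A n \<times> I0 A n"
      then have "q \<in> U2 n" using I0_sub unfolding U2_def by auto
      then show "(1 / real (card (cls X n q))) * (\<Sum>p\<in>cls X n q. (1::real)) = 1"
        using card_cls_pos[of q n X] by simp
    qed
    then show ?thesis by (simp add: card_I0 card_cartesian_product power2_eq_square)
  qed
  ultimately have "(\<Sum>p\<in>U2 n. real (card (cls X n p \<inter> (I0 A n \<times> I0 A n))) / real (card (cls X n p))) = real (N0 A n)^2"
    by simp
  then have "(\<Sum>p\<in>U2 n. real (card (cls X n p \<inter> (I0 A n \<times> I0 A n))) / real (card (cls X n p))) / real (N0 A n)^2 = 1"
    using assms by simp
  then show ?thesis unfolding cw_def sum_divide_distrib
    by (simp add: field_simps)
qed

lemma disc_lemma: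
  fixes c a :: "'i \<Rightarrow> real"
  assumes fin: "finite I" and cn: "\<And>k. k \<in> I \<Longrightarrow> c k \<ge> 0" and tot: "sum c I = 1" and b: "0 \<le> \<beta>"
  shows "(\<Sum>k\<in>I. c k * (if 1 - \<beta> \<le> (\<Sum>k'\<in>I. c k' * (if a k' < a k then 1 else 0)) then 1 else 0)) \<le> \<beta>"
proof -
  define F where "F t = (\<Sum>k'\<in>I. c k' * (if a k' < t then 1 else 0))" for t
  have Fmono: "F t \<le> F u" if "t \<le> u" for t u
    unfolding F_def using that cn by (intro sum_mono) auto
  define K where "K = {k\<in>I. 1 - \<beta> \<le> F (a k)}"
  show ?thesis
  proof (cases "K = {}")
    case True
    then have "(\<Sum>k\<in>I. c k * (if 1 - \<beta> \<le> F (a k) then 1 else 0)) = 0"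
      unfolding K_def by (intro sum.neutral) auto
    then show ?thesis using b unfolding F_def by simp
  next
    case False
    have finK: "finite K" using fin unfolding K_def by auto
    define m where "m = Min (a ` K)"
    have "m \<in> a ` K" unfolding m_def using Min_in[of "a ` K"] finK False by auto
    then obtain k0 where k0: "k0 \<in> K" "a k0 = m" by auto
    have Keq: "\<And>k. k \<in> I \<Longrightarrow> (1 - \<beta> \<le> F (a k)) = (m \<le> a k)"
    proof -
      fix k assume k: "k \<in> I"
      show "(1 - \<beta> \<le> F (a k)) = (m \<le> a k)"
      proof
        assume "1 - \<beta> \<le> F (a k)" then have "k \<in> K" using k unfolding K_def by auto
        then show "m \<le> a k" unfolding m_def using finK by auto
      next
        assume "m \<le> a k" then have "F m \<le> F (a k)" by (rule Fmono)
        moreover have "1 - \<beta> \<le> F m" using k0 unfolding K_def by auto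
        ultimately show "1 - \<beta> \<le> F (a k)" by linarith
      qed
    qed
    have "(\<Sum>k\<in>I. c k * (if 1 - \<beta> \<le> F (a k) then 1 else 0)) = (\<Sum>k\<in>I. c k * (if m \<le> a k then 1 else 0))"
      using Keq by (intro sum.cong) auto
    also have "\<dots> = (\<Sum>k\<in>I. c k) - F m"
      unfolding F_def sum_subtractf[symmetric] by (intro sum.cong) auto
    also have "\<dots> \<le> \<beta>"
      using tot k0 unfolding K_def by auto
    finally show ?thesis unfolding F_def .
  qed
qed




lemma regroup:
  assumes "finite S"
  shows "(\<Sum>v\<in>X ` S. \<Sum>i\<in>{x\<in>S. X x = v}. f v i) = (\<Sum>i\<in>S. f (X i) i)"
proof -
  have "(\<Sum>i\<in>S. f (X i) i) = (\<Sum>v\<in>X ` S. \<Sum>i\<in>{x\<in>S. X x = v}. f (X i) i)"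
    using sum.image_gen[OF assms, of "\<lambda>i. f (X i) i" X] .
  also have "\<dots> = (\<Sum>v\<in>X ` S. \<Sum>i\<in>{x\<in>S. X x = v}. f v i)"
    by (intro sum.cong) auto
  finally show ?thesis by simp
qed

lemma regroup_grp:
  "(\<Sum>v\<in>X ` {..<n}. \<Sum>i\<in>grp X n v. f v i) = (\<Sum>i<n. f (X i) i)"
  unfolding grp_def by (rule regroup) simp

lemma card_offdiag:
  assumes "finite G"
  shows "real (card {q\<in>G\<times>G. fst q \<noteq> snd q}) = real (card G) * (real (card G) - 1)"
proof -
  have "G \<times> G = {q\<in>G\<times>G. fst q \<noteq> snd q} \<union> (\<lambda>l. (l,l)) ` G" by auto
  moreover have "{q\<in>G\<times>G. fst q \<noteq> snd q} \<inter> (\<lambda>l. (l,l)) ` G = {}" by auto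
  moreover have "card ((\<lambda>l. (l,l)) ` G) = card G" by (rule card_image) (auto simp: inj_on_def)
  moreover have "finite {q\<in>G\<times>G. fst q \<noteq> snd q}" using assms by auto
  moreover have "finite ((\<lambda>l. (l,l)) ` G)" using assms by auto
  ultimately have "card (G \<times> G) = card {q\<in>G\<times>G. fst q \<noteq> snd q} + card G"
    using card_Un_disjoint[of "{q\<in>G\<times>G. fst q \<noteq> snd q}" "(\<lambda>l. (l,l)) ` G"] by simp
  then have "card G * card G = card {q\<in>G\<times>G. fst q \<noteq> snd q} + card G"
    by (simp add: card_cartesian_product)
  then have "real (card G) * real (card G) = real (card {q\<in>G\<times>G. fst q \<noteq> snd q}) + real (card G)"
    by (metis of_nat_add of_nat_mult)
  then show ?thesis by (simp add: algebra_simps)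
qed

lemma finite_grp: "finite (grp X n v)" unfolding grp_def by auto

lemma cw_diag:
  assumes "i < n"
  shows "cw X A n (i,i) = real (Nk0 X A n (X i)) / ((real (N0 A n))\<^sup>2 * real (Nk X n (X i)))"
proof -
  have c: "cls X n (i,i) = (\<lambda>l. (l,l)) ` grp X n (X i)"
    using assms unfolding cls_def Rel_def U2_def grp_def by auto
  have c0: "cls X n (i,i) \<inter> (I0 A n \<times> I0 A n) = (\<lambda>l. (l,l)) ` {l \<in> grp X n (X i). \<not> A l}"
    using assms unfolding cls_def Rel_def U2_def grp_def I0_def by (intro set_eqI) auto
  have inj: "inj_on (\<lambda>l. (l,l)) S" for S :: "nat set" by (auto simp: inj_on_def)
  show ?thesis unfolding cw_def c0 unfolding c Nk_def Nk0_def
    by (simp add: card_image[OF inj])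
qed

lemma cw_same:
  assumes "i < n" "j < n" "i \<noteq> j" "X i = X j"
  shows "cw X A n (i,j) = pairc X A n (X i) / (real (N0 A n))\<^sup>2"
proof -
  let ?G = "grp X n (X i)"
  let ?H = "{l \<in> grp X n (X i). \<not> A l}"
  have c: "cls X n (i,j) = {q\<in>?G\<times>?G. fst q \<noteq> snd q}"
    using assms unfolding cls_def Rel_def U2_def grp_def by auto
  have c0: "cls X n (i,j) \<inter> (I0 A n \<times> I0 A n) = {q\<in>?H\<times>?H. fst q \<noteq> snd q}"
    unfolding c by (auto simp: I0_def grp_def)
  have f0: "finite ?H" using finite_grp[of X n "X i"] by auto
  show ?thesis unfolding cw_def c0 unfolding c card_offdiag[OF finite_grp] card_offdiag[OF f0] pairc_def
    Nk_def[symmetric] Nk0_def[symmetric]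
    by (simp add: field_simps)
qed

lemma cw_diff:
  assumes "i < n" "j < n" "X i \<noteq> X j"
  shows "cw X A n (i,j) = real (Nk0 X A n (X i)) * real (Nk0 X A n (X j)) /
      ((real (N0 A n))\<^sup>2 * real (Nk X n (X i)) * real (Nk X n (X j)))"
proof -
  have c: "cls X n (i,j) = grp X n (X i) \<times> grp X n (X j)"
    using assms unfolding cls_def Rel_def U2_def grp_def by auto
  have c0: "cls X n (i,j) \<inter> (I0 A n \<times> I0 A n) = {l \<in> grp X n (X i). \<not> A l} \<times> {l \<in> grp X n (X j). \<not> A l}"
    using assms unfolding cls_def Rel_def U2_def grp_def I0_def by (intro set_eqI) auto
  show ?thesis unfolding cw_def c0 unfolding c Nk_def Nk0_def card_cartesian_product
    by (simp add: field_simps)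
qed

lemma split_j:
  fixes W :: "nat \<Rightarrow> real"
  assumes "i < n"
  shows "(\<Sum>j<n. W j) = W i + (\<Sum>j\<in>grp X n (X i) - {i}. W j) + (\<Sum>j\<in>{j\<in>{..<n}. X j \<noteq> X i}. W j)"
proof -
  have "(\<Sum>j<n. W j) = (\<Sum>j<n. (if j = i then W j else 0) + (if j \<noteq> i \<and> X j = X i then W j else 0)
        + (if X j \<noteq> X i then W j else 0))"
    by (intro sum.cong) auto
  also have "\<dots> = (\<Sum>j<n. (if j = i then W j else 0)) + (\<Sum>j<n. (if j \<noteq> i \<and> X j = X i then W j else 0))
        + (\<Sum>j<n. (if X j \<noteq> X i then W j else 0))"
    by (simp add: sum.distrib)
  also have "\<dots> = W i + (\<Sum>j\<in>{j\<in>{..<n}. j \<noteq> i \<and> X j = X i}. W j) + (\<Sum>j\<in>{j\<in>{..<n}. X j \<noteq> X i}. W j)"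
  proof -
    have "(\<Sum>j<n. if j \<noteq> i \<and> X j = X i then W j else 0) = (\<Sum>j\<in>{j\<in>{..<n}. j \<noteq> i \<and> X j = X i}. W j)"
      by (rule sum.inter_filter[symmetric]) simp
    moreover have "(\<Sum>j<n. if X j \<noteq> X i then W j else 0) = (\<Sum>j\<in>{j\<in>{..<n}. X j \<noteq> X i}. W j)"
      by (rule sum.inter_filter[symmetric]) simp
    ultimately show ?thesis using assms by simp
  qed
  also have "{j\<in>{..<n}. j \<noteq> i \<and> X j = X i} = grp X n (X i) - {i}" unfolding grp_def by auto
  finally show ?thesis .
qed

lemma mixcdf_eq:
  "mixcdf s X A n y t = (\<Sum>p\<in>U2 n. cw X A n p *
      (if min (Sbar s X A y (fst p)) (Sbar s X A y (snd p)) \<le> t then 1 else 0))"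
proof -
  define S where "S = Sbar s X A y"
  define N where "N = real (N0 A n)"
  define V where "V = X ` {..<n}"
  define ind where "ind i j = (if min (S i) (S j) \<le> t then 1 else (0::real))" for i j
  define W where "W i j = cw X A n (i,j) * ind i j" for i j
  have T1: "(\<Sum>v\<in>V. \<Sum>i\<in>grp X n v.
          real (Nk0 X A n v) / (N\<^sup>2 * real (Nk X n v)) * (if S i \<le> t then 1 else 0)) = (\<Sum>i<n. W i i)"
    unfolding V_def regroup_grp W_def ind_def N_def
    by (intro sum.cong) (auto simp: cw_diag)
  have T2: "(\<Sum>v\<in>V. \<Sum>i\<in>grp X n v. \<Sum>j\<in>grp X n v - {i}.
          pairc X A n v / N\<^sup>2 * (if min (S i) (S j) \<le> t then 1 else 0))
       = (\<Sum>i<n. \<Sum>j\<in>grp X n (X i) - {i}. W i j)"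
    unfolding V_def regroup_grp W_def ind_def N_def
    by (intro sum.cong refl) (auto simp: cw_same grp_def)
  have T3: "(\<Sum>v\<in>V. \<Sum>v'\<in>V - {v}. \<Sum>i\<in>grp X n v. \<Sum>j\<in>grp X n v'.
          real (Nk0 X A n v) * real (Nk0 X A n v') / (N\<^sup>2 * real (Nk X n v) * real (Nk X n v'))
          * (if min (S i) (S j) \<le> t then 1 else 0))
      = (\<Sum>i<n. \<Sum>j\<in>{j\<in>{..<n}. X j \<noteq> X i}. W i j)"
  proof -
    define h where "h v v' i j = real (Nk0 X A n v) * real (Nk0 X A n v') / (N\<^sup>2 * real (Nk X n v) * real (Nk X n v'))
          * (if min (S i) (S j) \<le> t then 1 else (0::real))" for v v' i j
    have "(\<Sum>v\<in>V. \<Sum>v'\<in>V - {v}. \<Sum>i\<in>grp X n v. \<Sum>j\<in>grp X n v'. h v v' i j)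
        = (\<Sum>v\<in>V. \<Sum>i\<in>grp X n v. \<Sum>v'\<in>V - {v}. \<Sum>j\<in>grp X n v'. h v v' i j)"
      by (intro sum.cong refl sum.swap)
    also have "\<dots> = (\<Sum>i<n. \<Sum>v'\<in>V - {X i}. \<Sum>j\<in>grp X n v'. h (X i) v' i j)"
      unfolding V_def by (rule regroup_grp)
    also have "\<dots> = (\<Sum>i<n. \<Sum>j\<in>{j\<in>{..<n}. X j \<noteq> X i}. W i j)"
    proof (rule sum.cong[OF refl])
      fix i assume i: "i \<in> {..<n}"
      define J where "J = {j\<in>{..<n}. X j \<noteq> X i}"
      have fJ: "finite J" unfolding J_def by auto
      have XJ: "X ` J = V - {X i}" unfolding J_def V_def by auto
      have "(\<Sum>j\<in>J. W i j) = (\<Sum>v'\<in>X ` J. \<Sum>j\<in>{x\<in>J. X x = v'}. W i j)"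
        using sum.image_gen[OF fJ, of "W i" X] .
      also have "\<dots> = (\<Sum>v'\<in>V - {X i}. \<Sum>j\<in>grp X n v'. h (X i) v' i j)"
        unfolding XJ
      proof (rule sum.cong[OF refl])
        fix v' assume v': "v' \<in> V - {X i}"
        have e: "{x\<in>J. X x = v'} = grp X n v'" using v' unfolding J_def grp_def by auto
        show "(\<Sum>j\<in>{x\<in>J. X x = v'}. W i j) = (\<Sum>j\<in>grp X n v'. h (X i) v' i j)"
          unfolding e
        proof (rule sum.cong[OF refl])
          fix j assume j: "j \<in> grp X n v'"
          have jn: "j < n" "X j = v'" using j unfolding grp_def by auto
          have "i < n" using i by simp
          then have "cw X A n (i,j) = real (Nk0 X A n (X i)) * real (Nk0 X A n (X j)) /
             ((real (N0 A n))\<^sup>2 * real (Nk X n (X i)) * real (Nk X n (X j)))"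
            using cw_diff[of i n j X A] jn v' by auto
          then show "W i j = h (X i) v' i j"
            unfolding W_def h_def ind_def N_def using jn by simp
        qed
      qed
      finally show "(\<Sum>v'\<in>V - {X i}. \<Sum>j\<in>grp X n v'. h (X i) v' i j) = (\<Sum>j\<in>{j\<in>{..<n}. X j \<noteq> X i}. W i j)"
        unfolding J_def by simp
    qed
    finally show ?thesis unfolding h_def .
  qed
  have "mixcdf s X A n y t = (\<Sum>i<n. W i i) + (\<Sum>i<n. \<Sum>j\<in>grp X n (X i) - {i}. W i j)
       + (\<Sum>i<n. \<Sum>j\<in>{j\<in>{..<n}. X j \<noteq> X i}. W i j)"
    unfolding mixcdf_def Let_def S_def[symmetric] N_def[symmetric] V_def[symmetric] T1 T2 T3 ..
  also have "\<dots> = (\<Sum>i<n. \<Sum>j<n. W i j)"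
    by (simp add: split_j[where X=X] sum.distrib)
  also have "\<dots> = (\<Sum>p\<in>U2 n. W (fst p) (snd p))"
    unfolding U2_def sum.cartesian_product by (simp add: case_prod_beta)
  finally show ?thesis unfolding W_def ind_def S_def by simp
qed




definition Sc :: "('x \<Rightarrow> 'y \<Rightarrow> real) \<Rightarrow> (nat \<Rightarrow> 'x) \<Rightarrow> (nat \<Rightarrow> 'y) \<Rightarrow> nat \<Rightarrow> real" where
  "Sc s X y l = s (X l) (y l)"
definition mn :: "('x \<Rightarrow> 'y \<Rightarrow> real) \<Rightarrow> (nat \<Rightarrow> 'x) \<Rightarrow> (nat \<Rightarrow> 'y) \<Rightarrow> nat \<times> nat \<Rightarrow> real" where
  "mn s X y p = min (Sc s X y (fst p)) (Sc s X y (snd p))"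
definition Fm :: "('x \<Rightarrow> 'y \<Rightarrow> real) \<Rightarrow> (nat \<Rightarrow> 'x) \<Rightarrow> (nat \<Rightarrow> bool) \<Rightarrow> nat \<Rightarrow> (nat \<Rightarrow> 'y) \<Rightarrow> real \<Rightarrow> real" where
  "Fm s X A n y t = (\<Sum>q\<in>U2 n. cw X A n q * (if mn s X y q < t then 1 else 0))"
definition gg :: "real \<Rightarrow> ('x \<Rightarrow> 'y \<Rightarrow> real) \<Rightarrow> (nat \<Rightarrow> 'x) \<Rightarrow> (nat \<Rightarrow> bool) \<Rightarrow> nat \<Rightarrow> nat \<times> nat \<Rightarrow> (nat \<Rightarrow> 'y) \<Rightarrow> real" where
  "gg \<beta> s X A n p y = (if 1 - \<beta> \<le> Fm s X A n y (mn s X y p) then 1 else 0)"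

lemma meas_Sc:
  assumes "\<And>x. s x \<in> borel_measurable Ym" "l < n"
  shows "(\<lambda>y. Sc s X y l) \<in> borel_measurable (PiM {..<n} (\<lambda>_. Ym))"
  unfolding Sc_def
  by (rule measurable_compose[OF measurable_component_singleton[of l "{..<n}" "\<lambda>_. Ym"] assms(1)[of "X l"]]) (use assms(2) in simp)

lemma meas_mn:
  assumes "\<And>x. s x \<in> borel_measurable Ym" "p \<in> U2 n"
  shows "(\<lambda>y. mn s X y p) \<in> borel_measurable (PiM {..<n} (\<lambda>_. Ym))"
  unfolding mn_def using assms meas_Sc[of s Ym _ n X] unfolding U2_def
  by (intro borel_measurable_min) auto

lemma meas_gg:
  assumes "\<And>x. s x \<in> borel_measurable Ym" "p \<in> U2 n"
  shows "gg \<beta> s X A n p \<in> borel_measurable (PiM {..<n} (\<lambda>_. Ym))"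
proof -
  have mq: "\<And>q. q \<in> U2 n \<Longrightarrow> (\<lambda>y. mn s X y q) \<in> borel_measurable (PiM {..<n} (\<lambda>_. Ym))"
    using meas_mn[of s Ym _ n X] assms(1) by blast
  have "(\<lambda>y. Fm s X A n y (mn s X y p)) \<in> borel_measurable (PiM {..<n} (\<lambda>_. Ym))"
    unfolding Fm_def
  proof (intro borel_measurable_sum borel_measurable_times borel_measurable_const)
    fix q assume q: "q \<in> U2 n"
    have "{y \<in> space (PiM {..<n} (\<lambda>_. Ym)). mn s X y q < mn s X y p} \<in> sets (PiM {..<n} (\<lambda>_. Ym))"
      using mq[OF q] mq[OF assms(2)] by measurable
    then show "(\<lambda>y. if mn s X y q < mn s X y p then 1 else 0 :: real) \<in> borel_measurable (PiM {..<n} (\<lambda>_. Ym))"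
      by (intro measurable_If) auto
  qed
  then have "{y \<in> space (PiM {..<n} (\<lambda>_. Ym)). 1 - \<beta> \<le> Fm s X A n y (mn s X y p)} \<in> sets (PiM {..<n} (\<lambda>_. Ym))"
    by measurable
  then show ?thesis unfolding gg_def[abs_def]
    by (intro measurable_If) auto
qed




lemma transpose_grp:
  assumes "X a = X b"
  shows "X (Transposition.transpose a b k) = X k"
  using assms by (auto simp: Transposition.transpose_def)

lemma perm_exists:
  assumes "Rel X n p q"
  shows "\<exists>\<pi>. \<pi> permutes {..<n} \<and> (\<forall>k<n. X (\<pi> k) = X k) \<and> \<pi> (fst q) = fst p \<and> \<pi> (snd q) = snd p"
proof -
  obtain i j l m where pq: "p = (i,j)" "q = (l,m)" by (cases p, cases q) auto
  have r: "i < n" "j < n" "l < n" "m < n" "X i = X l" "X j = X m" "(i = j) = (l = m)"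
    using assms unfolding Rel_def U2_def pq by auto
  define \<pi>1 where "\<pi>1 = Transposition.transpose l i"
  have p1: "\<pi>1 permutes {..<n}" unfolding \<pi>1_def using r by (intro permutes_swap_id) auto
  have g1: "X (\<pi>1 k) = X k" for k unfolding \<pi>1_def using r by (intro transpose_grp) simp
  show ?thesis
  proof (cases "i = j")
    case True
    then have "l = m" using r by simp
    then show ?thesis using p1 g1 True unfolding pq \<pi>1_def by auto
  next
    case False
    then have lm: "l \<noteq> m" using r by simp
    define m' where "m' = \<pi>1 m"
    have m'n: "m' < n" using p1 r unfolding m'_def by (meson lessThan_iff permutes_in_image)
    have m'i: "m' \<noteq> i" unfolding m'_def \<pi>1_def using lm by (auto simp: Transposition.transpose_def)
    have Xm': "X m' = X j" unfolding m'_def using g1 r by simp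
    define \<pi> where "\<pi> = Transposition.transpose m' j \<circ> \<pi>1"
    have "\<pi> permutes {..<n}" unfolding \<pi>_def
      by (rule permutes_compose[OF p1]) (intro permutes_swap_id, use m'n r in auto)
    moreover have "\<forall>k<n. X (\<pi> k) = X k" unfolding \<pi>_def using g1 transpose_grp[of X m' j, OF Xm'] by simp
    moreover have "\<pi> l = i" unfolding \<pi>_def using m'i False by (simp add: \<pi>1_def Transposition.transpose_def)
    moreover have "\<pi> m = j" unfolding \<pi>_def using m'_def by (simp add: Transposition.transpose_def)
    ultimately show ?thesis unfolding pq by auto
  qed
qed

lemma Rel_perm:
  assumes "\<pi> permutes {..<n}" "\<forall>k<n. X (\<pi> k) = X k" "r \<in> U2 n"
  shows "Rel X n r (map_prod \<pi> \<pi> r)"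
proof -
  have "inj \<pi>" using assms(1) permutes_inj by blast
  moreover have "\<pi> (fst r) < n" "\<pi> (snd r) < n" using assms(1,3) unfolding U2_def
    using assms(3) permutes_in_image[OF assms(1), of "fst r"] permutes_in_image[OF assms(1), of "snd r"]
    unfolding U2_def by (auto simp: mem_Times_iff)
  ultimately show ?thesis using assms unfolding Rel_def U2_def
    by (cases r) (auto simp: inj_eq)
qed

lemma Fm_perm:
  assumes "\<pi> permutes {..<n}" "\<forall>k<n. X (\<pi> k) = X k"
  shows "Fm s X A n (restrict (\<lambda>i. y (\<pi> i)) {..<n}) t = Fm s X A n y t"
    and "\<And>r. r \<in> U2 n \<Longrightarrow> mn s X (restrict (\<lambda>i. y (\<pi> i)) {..<n}) r = mn s X y (map_prod \<pi> \<pi> r)"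
proof -
  let ?y = "restrict (\<lambda>i. y (\<pi> i)) {..<n}"
  show mnp: "\<And>r. r \<in> U2 n \<Longrightarrow> mn s X ?y r = mn s X y (map_prod \<pi> \<pi> r)"
    using assms(2) unfolding mn_def Sc_def U2_def by (auto simp: case_prod_beta)
  have bij: "bij_betw (map_prod \<pi> \<pi>) (U2 n) (U2 n)"
    unfolding U2_def using permutes_imp_bij[OF assms(1)] by (intro bij_betw_map_prod)
  have "Fm s X A n ?y t = (\<Sum>r\<in>U2 n. cw X A n (map_prod \<pi> \<pi> r) * (if mn s X y (map_prod \<pi> \<pi> r) < t then 1 else 0))"
    unfolding Fm_def using mnp cw_eq[OF Rel_perm[OF assms]] by (intro sum.cong) auto
  also have "\<dots> = Fm s X A n y t"
    unfolding Fm_def by (rule sum.reindex_bij_betw[OF bij])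
  finally show "Fm s X A n ?y t = Fm s X A n y t" .
qed




lemma Sbar_ge: "ereal (Sc s X y l) \<le> Sbar s X A y l"
  unfolding Sbar_def Sc_def by auto

lemma key_cov:
  assumes "p \<in> U2 n" "quant2 \<beta> s X A n y < ereal (mn s X y p)"
  shows "1 - \<beta> \<le> Fm s X A n y (mn s X y p)"
proof -
  obtain t where t: "1 - \<beta> \<le> mixcdf s X A n y t" "t < ereal (mn s X y p)"
    using assms(2) unfolding quant2_def by (auto simp: Inf_less_iff)
  have "mixcdf s X A n y t \<le> Fm s X A n y (mn s X y p)"
    unfolding mixcdf_eq Fm_def
  proof (rule sum_mono)
    fix q assume q: "q \<in> U2 n"
    have "(if min (Sbar s X A y (fst q)) (Sbar s X A y (snd q)) \<le> t then 1 else 0)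
        \<le> (if mn s X y q < mn s X y p then 1 else (0::real))"
    proof (cases "min (Sbar s X A y (fst q)) (Sbar s X A y (snd q)) \<le> t")
      case True
      have "ereal (mn s X y q) \<le> min (Sbar s X A y (fst q)) (Sbar s X A y (snd q))"
      proof -
        have "ereal (mn s X y q) \<le> ereal (Sc s X y (fst q))" "ereal (mn s X y q) \<le> ereal (Sc s X y (snd q))"
          unfolding mn_def by auto
        then show ?thesis using Sbar_ge[of s X y "fst q" A] Sbar_ge[of s X y "snd q" A]
          by (meson order.trans min.boundedI)
      qed
      then have "ereal (mn s X y q) < ereal (mn s X y p)" using True t(2) by (meson order.trans order_le_less_trans)
      then show ?thesis by simp
    qed simp
    then show "cw X A n q * (if min (Sbar s X A y (fst q)) (Sbar s X A y (snd q)) \<le> t then 1 else 0)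
        \<le> cw X A n q * (if mn s X y q < mn s X y p then 1 else 0)"
      by (rule mult_left_mono) (rule cw_nonneg)
  qed
  then show ?thesis using t(1) by linarith
qed

theorem theorem4:
  fixes n :: nat and X :: "nat \<Rightarrow> 'x" and A :: "nat \<Rightarrow> bool"
    and Ym :: "'y measure" and M :: "(nat \<Rightarrow> 'y) measure"
    and s :: "'x \<Rightarrow> 'y \<Rightarrow> real" and \<alpha> :: real
  assumes "prob_space M"
    and "sets M = sets (PiM {..<n} (\<lambda>_. Ym))"
    and "\<And>x. s x \<in> borel_measurable Ym"
    and "0 < \<alpha>" and "\<alpha> < 1"
    and "\<And>\<pi>. \<pi> permutes {..<n} \<Longrightarrow> (\<forall>i<n. X (\<pi> i) = X i) \<Longrightarrow>
           distr M M (\<lambda>y. restrict (\<lambda>i. y (\<pi> i)) {..<n}) = M"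
  shows "(\<integral>y. (miscov \<alpha> s X A n y)\<^sup>2 \<partial>M) \<le> \<alpha>\<^sup>2"
proof -
  interpret P: prob_space M by fact
  have measM: "f \<in> borel_measurable M" if "f \<in> borel_measurable (PiM {..<n} (\<lambda>_. Ym))" for f :: "_ \<Rightarrow> real"
    using that measurable_cong_sets[OF assms(2) refl] by blast
  define \<beta> where "\<beta> = \<alpha>\<^sup>2"
  have b0: "0 \<le> \<beta>" unfolding \<beta>_def by simp
  show ?thesis
  proof (cases "N0 A n = 0")
    case True
    then show ?thesis unfolding miscov_def by simp
  next
    case False
    define N where "N = real (N0 A n)"
    have Npos: "N > 0" using False unfolding N_def by simp
    let ?I = "I0 A n \<times> I0 A n"
    let ?g = "gg \<beta> s X A n"
    define G where "G y = (\<Sum>q\<in>?I. ?g q y) / N\<^sup>2" for y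
    have sub0: "?I \<subseteq> U2 n" using I0_sub unfolding U2_def by auto
    have finI: "finite ?I" using finite_subset[OF sub0 finite_U2] .
    have ggm: "?g p \<in> borel_measurable M" if "p \<in> U2 n" for p
      using meas_gg[of s Ym p n \<beta> X A] assms(3) that measM by blast
    have ggb: "0 \<le> ?g p y" "?g p y \<le> 1" for p y unfolding gg_def by auto
    have ggi: "integrable M (?g p)" if "p \<in> U2 n" for p
      by (rule P.integrable_const_bound[where B=1]) (use ggb ggm[OF that] in auto)
    have "integrable M (\<lambda>y. \<Sum>q\<in>?I. ?g q y)"
      by (rule Bochner_Integration.integrable_sum) (use ggi sub0 in blast)
    then have Gi: "integrable M G" unfolding G_def by (rule integrable_divide)
    have pw: "(miscov \<alpha> s X A n y)\<^sup>2 \<le> G y" for y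
    proof -
      define b where "b i = (if y i \<notin> C2 \<alpha> s X A n y (X i) then 1 else (0::real))" for i
      have mc: "miscov \<alpha> s X A n y = (\<Sum>i\<in>I0 A n. b i) / N"
        unfolding miscov_def b_def N_def I0_def using False by simp
      have sq: "(\<Sum>i\<in>I0 A n. b i)\<^sup>2 = (\<Sum>q\<in>?I. b (fst q) * b (snd q))"
        unfolding power2_eq_square sum_product sum.cartesian_product by (simp add: case_prod_beta)
      have "(\<Sum>q\<in>?I. b (fst q) * b (snd q)) \<le> (\<Sum>q\<in>?I. ?g q y)"
      proof (rule sum_mono)
        fix q assume q: "q \<in> ?I"
        show "b (fst q) * b (snd q) \<le> ?g q y"
        proof (cases "b (fst q) = 1 \<and> b (snd q) = 1")
          case True
          then have "quant2 \<beta> s X A n y < ereal (Sc s X y (fst q))"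
              "quant2 \<beta> s X A n y < ereal (Sc s X y (snd q))"
            unfolding b_def C2_def Sc_def \<beta>_def by (auto split: if_splits)
          then have "quant2 \<beta> s X A n y < ereal (mn s X y q)"
            unfolding mn_def by (auto simp: min_def)
          then have "1 - \<beta> \<le> Fm s X A n y (mn s X y q)" using key_cov q sub0 by blast
          then show ?thesis using True unfolding gg_def by simp
        next
          case False
          then have "b (fst q) * b (snd q) = 0" unfolding b_def by (auto split: if_splits)
          then show ?thesis using ggb(1)[of q y] by linarith
        qed
      qed
      then show ?thesis unfolding mc G_def power_divide sq using Npos
        by (simp add: divide_right_mono)
    qed
    have step1: "(\<integral>y. (miscov \<alpha> s X A n y)\<^sup>2 \<partial>M) \<le> integral\<^sup>L M G"
    proof (cases "integrable M (\<lambda>y. (miscov \<alpha> s X A n y)\<^sup>2)")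
      case True
      then show ?thesis using Gi pw by (intro integral_mono) auto
    next
      case False
      have "0 \<le> integral\<^sup>L M G" unfolding G_def using ggb by (intro integral_nonneg_AE AE_I2 divide_nonneg_nonneg sum_nonneg) auto
      then show ?thesis using not_integrable_integral_eq[OF False] by simp
    qed
    have exch: "integral\<^sup>L M (?g p) = integral\<^sup>L M (?g q)" if q: "q \<in> ?I" and p: "p \<in> cls X n q" for p q
    proof -
      have R: "Rel X n q p" using p unfolding cls_def by simp
      then have pU: "p \<in> U2 n" unfolding Rel_def by simp
      obtain \<pi> where pi: "\<pi> permutes {..<n}" "\<forall>k<n. X (\<pi> k) = X k" "\<pi> (fst p) = fst q" "\<pi> (snd p) = snd q"
        using perm_exists[OF R] by blast
      define T where "T y = restrict (\<lambda>i. y (\<pi> i)) {..<n}" for y :: "nat \<Rightarrow> 'y"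
      have Tm: "T \<in> measurable M M"
      proof -
        have "T \<in> measurable (PiM {..<n} (\<lambda>_. Ym)) (PiM {..<n} (\<lambda>_. Ym))"
          unfolding T_def
          by (intro measurable_restrict measurable_component_singleton) (use permutes_in_image[OF pi(1)] in auto)
        then show ?thesis using measurable_cong_sets[OF assms(2) assms(2)] by blast
      qed
      have mp: "map_prod \<pi> \<pi> p = q" using pi(3,4) by (cases p, cases q) auto
      have gT: "?g p (T y) = ?g q y" for y
        unfolding gg_def T_def Fm_perm(1)[OF pi(1,2)] Fm_perm(2)[OF pi(1,2) pU] mp ..
      have "integral\<^sup>L M (?g q) = integral\<^sup>L M (\<lambda>y. ?g p (T y))" using gT by simp
      also have "\<dots> = integral\<^sup>L (distr M M T) (?g p)"
        by (rule integral_distr[symmetric, OF Tm ggm[OF pU]])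
      also have "distr M M T = M" unfolding T_def using assms(6)[OF pi(1,2)] .
      finally show ?thesis by simp
    qed
    have "integral\<^sup>L M G = (\<Sum>q\<in>?I. integral\<^sup>L M (?g q)) / N\<^sup>2"
      unfolding G_def integral_divide_zero
      by (subst Bochner_Integration.integral_sum) (use ggi sub0 in auto)
    also have "(\<Sum>q\<in>?I. integral\<^sup>L M (?g q)) = (\<Sum>q\<in>?I. (1 / real (card (cls X n q))) * (\<Sum>p\<in>cls X n q. integral\<^sup>L M (?g p)))"
    proof (rule sum.cong[OF refl])
      fix q assume q: "q \<in> ?I"
      have "(\<Sum>p\<in>cls X n q. integral\<^sup>L M (?g p)) = real (card (cls X n q)) * integral\<^sup>L M (?g q)"
        using exch[OF q] by simp
      moreover have "card (cls X n q) > 0" using card_cls_pos q sub0 by blast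
      ultimately show "integral\<^sup>L M (?g q) = (1 / real (card (cls X n q))) * (\<Sum>p\<in>cls X n q. integral\<^sup>L M (?g p))"
        by simp
    qed
    also have "\<dots> = (\<Sum>p\<in>U2 n. integral\<^sup>L M (?g p) * real (card (cls X n p \<inter> ?I)) / real (card (cls X n p)))"
      by (rule swap_lemma)
    finally have "integral\<^sup>L M G = (\<Sum>p\<in>U2 n. cw X A n p * integral\<^sup>L M (?g p))"
      unfolding cw_def sum_divide_distrib N_def by (simp add: field_simps)
    also have "\<dots> = integral\<^sup>L M (\<lambda>y. \<Sum>p\<in>U2 n. cw X A n p * ?g p y)"
      by (subst Bochner_Integration.integral_sum) (use ggi in auto)
    also have "\<dots> \<le> \<beta>"
    proof (rule P.integral_le_const)
      show "integrable M (\<lambda>y. \<Sum>p\<in>U2 n. cw X A n p * ?g p y)" using ggi by auto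
      show "AE y in M. (\<Sum>p\<in>U2 n. cw X A n p * ?g p y) \<le> \<beta>"
      proof (rule AE_I2)
        fix y
        show "(\<Sum>p\<in>U2 n. cw X A n p * ?g p y) \<le> \<beta>"
          unfolding gg_def Fm_def
          by (rule disc_lemma[OF finite_U2 cw_nonneg cw_total b0]) (use False in simp)
      qed
    qed
    finally show ?thesis using step1 unfolding \<beta>_def by simp
  qed
qed


end
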